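(* The reflection map $r:(\mathcal G^n)^{\circ}\to\mathcal G^n$ on the $B_n$-groupoid $\mathcal G^n$ is a fully faithful functor.
   Context: $G$ is a finite group with identity $e$. $B_n$ (generators $b_1,\dots,b_{n-1}$) acts on $G^n$ by $b_i(\boldsymbol\gamma)=(\gamma_1,\dots,\gamma_{i-1},\gamma_i\gamma_{i+1}\gamma_i^{-1},\gamma_i,\gamma_{i+2},\dots,\gamma_n)$. For $b\in B_n$ and $\boldsymbol\gamma\in G^n$ there is an associated element $b_{\boldsymbol\gamma}\in G^n\rtimes S_n$ ($G^n\rtimes S_n$ acting on $G^n$ by componentwise conjugation and permutation of positions), determined by $b_{i,\boldsymbol\gamma}=((e,\dots,e,\gamma_i,e,\dots,e),(i,i+1))$ ($\gamma_i$ in slot $i$) and $(bb')_{\boldsymbol\gamma}=b_{b'\boldsymbol\gamma}b'_{\boldsymbol\gamma}$; it acts on $\boldsymbol\gamma$ as $b$ does. The $B_n$-groupoid $\mathcal G^n$ has objects $G^n$ and morphisms $\mathrm{hom}(\boldsymbol\gamma_1,\boldsymbol\gamma_2)=\{b_{\boldsymbol\gamma_1}:b\in B_n,\ b\boldsymbol\gamma_1=\boldsymbol\gamma_2\}$, composed by multiplication in $G^n\rtimes S_n$. The reflection map is the functor $r:(\mathcal G^n)^\circ\to\mathcal G^n$ (from the opposite groupoid) given on objects by $r(\gamma_1,\dots,\gamma_n)=(\gamma_n^{-1},\dots,\gamma_1^{-1})$ and on morphisms by sending $b_{i,\boldsymbol\gamma}$ (viewed as an arrow $b_i\boldsymbol\gamma\to\boldsymbol\gamma$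 of the opposite groupoid) to $b_{n-i,r(b_i\boldsymbol\gamma)}:r(b_i\boldsymbol\gamma)\to r(\boldsymbol\gamma)$, extended to composites (this is well defined). *)

theory Defs
  imports "HOL-Algebra.Group"
begin

text \<open>Positions are 1..n. A tuple in G^n is a function nat => 'a with values
in carrier G on 1..n and the unit elsewhere. An element of G^n x| S_n is a pair (g, sigma)
with g such a tuple and sigma a permutation of nat fixing everything outside 1..n.
A braid is represented by a word in the generators b_i and their inverses:
(i, True) is b_i, (i, False) is b_i^-1; the list [x1,...,xk] stands for x1 x2 ... xk
(so xk acts first).\<close>

definition objs :: "('a, 'b) monoid_scheme \<Rightarrow> nat \<Rightarrow> (nat \<Rightarrow> 'a) set" where
  "objs G n = {\<gamma>. (\<forall>k\<in>{1..n}. \<gamma> k \<in> carrier G) \<and> (\<forall>k. k \<notin> {1..n} \<longrightarrow> \<gamma> k = \<one>\<^bsub>G\<^esub>)}"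

definition gens :: "nat \<Rightarrow> (nat \<times> bool) set" where
  "gens n = {(i, s). i \<in> {1..n - 1}}"

definition gen_act :: "('a, 'b) monoid_scheme \<Rightarrow> nat \<times> bool \<Rightarrow> (nat \<Rightarrow> 'a) \<Rightarrow> (nat \<Rightarrow> 'a)" where
  "gen_act G x \<gamma> = (case x of (i, s) \<Rightarrow>
     if s then \<gamma>(i := \<gamma> i \<otimes>\<^bsub>G\<^esub> \<gamma> (i+1) \<otimes>\<^bsub>G\<^esub> inv\<^bsub>G\<^esub> (\<gamma> i), i+1 := \<gamma> i)
     else \<gamma>(i := \<gamma> (i+1), i+1 := inv\<^bsub>G\<^esub> (\<gamma> (i+1)) \<otimes>\<^bsub>G\<^esub> \<gamma> i \<otimes>\<^bsub>G\<^esub> \<gamma> (i+1)))"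

fun braid_act :: "('a, 'b) monoid_scheme \<Rightarrow> (nat \<times> bool) list \<Rightarrow> (nat \<Rightarrow> 'a) \<Rightarrow> (nat \<Rightarrow> 'a)" where
  "braid_act G [] \<gamma> = \<gamma>"
| "braid_act G (x # w) \<gamma> = gen_act G x (braid_act G w \<gamma>)"

text \<open>The semidirect product G^n x| S_n, acting on G^n by
(g, sigma) . delta = (k |-> g_k delta_(sigma^-1 k) g_k^-1).\<close>
definition sd_mult :: "('a, 'b) monoid_scheme \<Rightarrow> (nat \<Rightarrow> 'a) \<times> (nat \<Rightarrow> nat)
    \<Rightarrow> (nat \<Rightarrow> 'a) \<times> (nat \<Rightarrow> nat) \<Rightarrow> (nat \<Rightarrow> 'a) \<times> (nat \<Rightarrow> nat)" where
  "sd_mult G x y = (case x of (g, \<sigma>) \<Rightarrow> case y of (h, \<tau>) \<Rightarrow>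
     (\<lambda>k. g k \<otimes>\<^bsub>G\<^esub> h (inv_into UNIV \<sigma> k), \<sigma> \<circ> \<tau>))"

definition sd_inv :: "('a, 'b) monoid_scheme \<Rightarrow> (nat \<Rightarrow> 'a) \<times> (nat \<Rightarrow> nat) \<Rightarrow> (nat \<Rightarrow> 'a) \<times> (nat \<Rightarrow> nat)" where
  "sd_inv G x = (case x of (g, \<sigma>) \<Rightarrow> (\<lambda>j. inv\<^bsub>G\<^esub> (g (\<sigma> j)), inv_into UNIV \<sigma>))"

text \<open>b_(i,gamma) = ((e,..,gamma_i,..,e), (i,i+1)); (b_i^-1)_gamma is the inverse of
b_(i, b_i^-1 gamma), as forced by (b b')_gamma = b_(b' gamma) b'_gamma.\<close>
definition gen_pos_elt :: "('a, 'b) monoid_scheme \<Rightarrow> nat \<Rightarrow> (nat \<Rightarrow> 'a) \<Rightarrow> (nat \<Rightarrow> 'a) \<times> (nat \<Rightarrow> nat)" where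
  "gen_pos_elt G i \<gamma> = ((\<lambda>k. \<one>\<^bsub>G\<^esub>)(i := \<gamma> i), id(i := i + 1, i + 1 := i))"

definition gen_elt :: "('a, 'b) monoid_scheme \<Rightarrow> nat \<times> bool \<Rightarrow> (nat \<Rightarrow> 'a) \<Rightarrow> (nat \<Rightarrow> 'a) \<times> (nat \<Rightarrow> nat)" where
  "gen_elt G x \<gamma> = (case x of (i, s) \<Rightarrow>
     if s then gen_pos_elt G i \<gamma> else sd_inv G (gen_pos_elt G i (gen_act G (i, False) \<gamma>)))"

fun braid_elt :: "('a, 'b) monoid_scheme \<Rightarrow> (nat \<times> bool) list \<Rightarrow> (nat \<Rightarrow> 'a) \<Rightarrow> (nat \<Rightarrow> 'a) \<times> (nat \<Rightarrow> nat)" where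
  "braid_elt G [] \<gamma> = ((\<lambda>k. \<one>\<^bsub>G\<^esub>), id)"
| "braid_elt G (x # w) \<gamma> = sd_mult G (gen_elt G x (braid_act G w \<gamma>)) (braid_elt G w \<gamma>)"

definition hom :: "('a, 'b) monoid_scheme \<Rightarrow> nat \<Rightarrow> (nat \<Rightarrow> 'a) \<Rightarrow> (nat \<Rightarrow> 'a)
    \<Rightarrow> ((nat \<Rightarrow> 'a) \<times> (nat \<Rightarrow> nat)) set" where
  "hom G n \<gamma>1 \<gamma>2 = {braid_elt G w \<gamma>1 | w. set w \<subseteq> gens n \<and> braid_act G w \<gamma>1 = \<gamma>2}"

definition refl_obj :: "('a, 'b) monoid_scheme \<Rightarrow> nat \<Rightarrow> (nat \<Rightarrow> 'a) \<Rightarrow> (nat \<Rightarrow> 'a)" where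
  "refl_obj G n \<gamma> = (\<lambda>k. if k \<in> {1..n} then inv\<^bsub>G\<^esub> (\<gamma> (n + 1 - k)) else \<one>\<^bsub>G\<^esub>)"

text \<open>Reflection on words: b_i^(+-1) |-> b_(n-i)^(+-1), order reversed (contravariance).\<close>
definition refl_word :: "nat \<Rightarrow> (nat \<times> bool) list \<Rightarrow> (nat \<times> bool) list" where
  "refl_word n w = rev (map (\<lambda>(i, s). (n - i, s)) w)"

text \<open>Reflection on morphisms: a morphism f = w_gamma1 : gamma1 -> w gamma1 of the groupoid,
viewed as an arrow w gamma1 -> gamma1 of the opposite groupoid, is sent to
(refl_word w)_(r(w gamma1)) : r(w gamma1) -> r(gamma1). This extends the assignment
b_(i,gamma) |-> b_(n-i, r(b_i gamma)) to composites.\<close>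
definition refl_mor :: "('a, 'b) monoid_scheme \<Rightarrow> nat \<Rightarrow> (nat \<Rightarrow> 'a)
    \<Rightarrow> (nat \<Rightarrow> 'a) \<times> (nat \<Rightarrow> nat) \<Rightarrow> (nat \<Rightarrow> 'a) \<times> (nat \<Rightarrow> nat)" where
  "refl_mor G n \<gamma>1 f = (let w = (SOME w. set w \<subseteq> gens n \<and> braid_elt G w \<gamma>1 = f)
     in braid_elt G (refl_word n w) (refl_obj G n (braid_act G w \<gamma>1)))"

end

theory Submission
  imports Defs
begin


definition rho :: "nat \<Rightarrow> nat \<Rightarrow> nat" where
  "rho n k = (if k \<in> {1..n} then n + 1 - k else k)"

lemma rho_rho[simp]: "rho n (rho n k) = k"
  unfolding rho_def by auto

lemma rho_comp[simp]: "rho n \<circ> rho n = id"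
  by auto

lemma rho_comp2[simp]: "f \<circ> rho n \<circ> rho n = f"
  by (auto simp: fun_eq_iff)

lemma bij_rho[simp]: "bij (rho n)"
  using o_bij[OF rho_comp rho_comp] .

lemma inv_rho[simp]: "inv_into UNIV (rho n) = rho n"
  by (rule inv_unique_comp) auto

definition swp :: "nat \<Rightarrow> nat \<Rightarrow> nat" where
  "swp i = id(i := i + 1, i + 1 := i)"

lemma swp_swp[simp]: "swp i (swp i k) = k"
  unfolding swp_def by auto

lemma swp_comp[simp]: "swp i \<circ> swp i = id"
  by auto

lemma bij_swp[simp]: "bij (swp i)"
  using o_bij[OF swp_comp swp_comp] .

lemma inv_swp[simp]: "inv_into UNIV (swp i) = swp i"
  by (rule inv_unique_comp) auto

definition Phi :: "('a, 'b) monoid_scheme \<Rightarrow> nat \<Rightarrow> (nat \<Rightarrow> 'a) \<times> (nat \<Rightarrow> nat) \<Rightarrow> (nat \<Rightarrow> 'a) \<times> (nat \<Rightarrow> nat)" where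
  "Phi G n x = (case x of (g, \<sigma>) \<Rightarrow> (\<lambda>k. inv\<^bsub>G\<^esub> (g (\<sigma> (rho n k))), rho n \<circ> inv_into UNIV \<sigma> \<circ> rho n))"

definition good :: "('a, 'b) monoid_scheme \<Rightarrow> (nat \<Rightarrow> 'a) \<times> (nat \<Rightarrow> nat) \<Rightarrow> bool" where
  "good G x = ((\<forall>k. fst x k \<in> carrier G) \<and> bij (snd x))"

definition allc :: "('a, 'b) monoid_scheme \<Rightarrow> (nat \<Rightarrow> 'a) \<Rightarrow> bool" where
  "allc G \<gamma> = (\<forall>k. \<gamma> k \<in> carrier G)"

lemma rho_swp_pt: assumes "1 \<le> i" "i < n" shows "rho n (swp i (rho n k)) = swp (n - i) k"
proof -
  consider "k = n - i" | "k = n + 1 - i" | "k \<noteq> n - i" "k \<noteq> n + 1 - i" by blast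
  then show ?thesis
  proof cases
    case 1 then show ?thesis using assms by (simp add: rho_def swp_def; arith)
  next
    case 2 then show ?thesis using assms by (simp add: rho_def swp_def; arith)
  next
    case 3
    have "rho n k \<noteq> i" "rho n k \<noteq> i + 1" using 3 assms by (auto simp: rho_def)
    then have "swp i (rho n k) = rho n k" by (simp add: swp_def)
    moreover have "swp (n - i) k = k" using 3 assms unfolding swp_def by auto
    ultimately show ?thesis by simp
  qed
qed

context group begin

lemma allc_gen_act: "allc G \<gamma> \<Longrightarrow> allc G (gen_act G x \<gamma>)"
  unfolding allc_def gen_act_def by (auto split: prod.splits)

lemma allc_braid_act: "allc G \<gamma> \<Longrightarrow> allc G (braid_act G w \<gamma>)"
  by (induction w) (auto simp: allc_gen_act)

lemma gen_pos_elt_swp: "gen_pos_elt G i \<gamma> = ((\<lambda>k. \<one>)(i := \<gamma> i), swp i)"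
  unfolding gen_pos_elt_def swp_def by simp

lemma good_gen_pos: "allc G \<gamma> \<Longrightarrow> good G (gen_pos_elt G i \<gamma>)"
  unfolding gen_pos_elt_swp good_def allc_def by auto

lemma good_sd_mult: "good G x \<Longrightarrow> good G y \<Longrightarrow> good G (sd_mult G x y)"
  unfolding good_def sd_mult_def by (auto split: prod.splits intro: bij_comp)

lemma good_sd_inv: "good G x \<Longrightarrow> good G (sd_inv G x)"
  unfolding good_def sd_inv_def by (auto split: prod.splits intro: bij_imp_bij_inv)

lemma good_Phi: "good G x \<Longrightarrow> good G (Phi G n x)"
  unfolding good_def Phi_def by (auto split: prod.splits intro!: bij_comp bij_imp_bij_inv)

lemma good_gen_elt: "allc G \<gamma> \<Longrightarrow> good G (gen_elt G x \<gamma>)"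
  unfolding gen_elt_def by (auto split: prod.splits intro!: good_sd_inv good_gen_pos allc_gen_act)

lemma good_unit: "good G ((\<lambda>k. \<one>), id)"
  unfolding good_def by auto

lemma good_braid_elt: "allc G \<gamma> \<Longrightarrow> good G (braid_elt G w \<gamma>)"
  by (induction w) (auto intro!: good_sd_mult good_gen_elt allc_braid_act good_unit)


lemma binv1[simp]: "bij s \<Longrightarrow> inv_into UNIV s (s x) = x"
  by (simp add: bij_is_inj)

lemma binv2[simp]: "bij s \<Longrightarrow> s (inv_into UNIV s x) = x"
  by (simp add: bij_is_surj surj_f_inv_f)

lemma inv_conj: "bij s \<Longrightarrow> inv_into UNIV (rho n \<circ> inv_into UNIV s \<circ> rho n) = rho n \<circ> s \<circ> rho n"
  by (rule inv_unique_comp) (auto simp: fun_eq_iff)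

lemma inv_conj2: "bij s \<Longrightarrow> inv_into UNIV (rho n \<circ> s \<circ> rho n) = rho n \<circ> inv_into UNIV s \<circ> rho n"
  by (rule inv_unique_comp) (auto simp: fun_eq_iff)

lemma sd_mult_unit: "good G y \<Longrightarrow> sd_mult G ((\<lambda>k. \<one>), id) y = y"
proof -
  assume a: "good G y"
  obtain h t where y: "y = (h, t)" by fastforce
  have "\<And>j. h j \<in> carrier G" using a y unfolding good_def by auto
  then show ?thesis unfolding y sd_mult_def prod.case by (simp add: fun_eq_iff)
qed


lemma sd_mult_assoc: "good G x \<Longrightarrow> good G y \<Longrightarrow> good G z \<Longrightarrow>
   sd_mult G (sd_mult G x y) z = sd_mult G x (sd_mult G y z)"
proof -
  assume a: "good G x" "good G y" "good G z"
  obtain g s where x: "x = (g, s)" by fastforce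
  obtain h t where y: "y = (h, t)" by fastforce
  obtain k u where z: "z = (k, u)" by fastforce
  have b: "bij s" "bij t" "bij u" and c: "\<And>j. g j \<in> carrier G" "\<And>j. h j \<in> carrier G" "\<And>j. k j \<in> carrier G"
    using a x y z unfolding good_def by auto
  show ?thesis unfolding x y z sd_mult_def prod.case
    using b apply (simp add: o_inv_distrib o_assoc)
    apply (rule ext)
    apply (rule m_assoc)
    using c by auto
qed

lemma Phi_anti: "good G x \<Longrightarrow> good G y \<Longrightarrow>
   Phi G n (sd_mult G x y) = sd_mult G (Phi G n y) (Phi G n x)"
proof -
  assume a: "good G x" "good G y"
  obtain g s where x: "x = (g, s)" by fastforce
  obtain h t where y: "y = (h, t)" by fastforce
  have b: "bij s" "bij t" and c: "\<And>j. g j \<in> carrier G" "\<And>j. h j \<in> carrier G"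
    using a x y unfolding good_def by auto
  show ?thesis unfolding x y sd_mult_def Phi_def prod.case
    using b apply (simp add: inv_conj o_inv_distrib bij_imp_bij_inv o_assoc)
    using c by (simp add: fun_eq_iff inv_mult_group)
qed

lemma Phi_Phi: "good G x \<Longrightarrow> Phi G n (Phi G n x) = x"
proof -
  assume a: "good G x"
  obtain g s where x: "x = (g, s)" by fastforce
  have b: "bij s" and c: "\<And>j. g j \<in> carrier G"
    using a x unfolding good_def by auto
  show ?thesis unfolding x Phi_def prod.case
    using b c by (simp add: inv_conj o_assoc)
qed

lemma Phi_sd_inv: "good G x \<Longrightarrow> Phi G n (sd_inv G x) = sd_inv G (Phi G n x)"
proof -
  assume a: "good G x"
  obtain g s where x: "x = (g, s)" by fastforce
  have b: "bij s" and c: "\<And>j. g j \<in> carrier G"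
    using a x unfolding good_def by auto
  show ?thesis unfolding x Phi_def sd_inv_def prod.case
    using b c by (simp add: inv_conj inv_inv_eq o_assoc)
qed

end


lemma refl_obj_upd: assumes "1 \<le> i" "i < n"
  shows "refl_obj G n (\<beta>(i := a, i + 1 := b)) = (refl_obj G n \<beta>)(n - i := inv\<^bsub>G\<^esub> b, n - i + 1 := inv\<^bsub>G\<^esub> a)"
proof (rule ext)
  fix k
  consider "k = n - i" | "k = n - i + 1" | "k \<noteq> n - i" "k \<noteq> n - i + 1" by blast
  then show "refl_obj G n (\<beta>(i := a, i + 1 := b)) k = ((refl_obj G n \<beta>)(n - i := inv\<^bsub>G\<^esub> b, n - i + 1 := inv\<^bsub>G\<^esub> a)) k"
  proof cases
    case 1
    have "n + 1 - k = i + 1" "k \<in> {1..n}" using 1 assms by auto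
    then show ?thesis using 1 by (simp add: refl_obj_def)
  next
    case 2
    have "n + 1 - k = i" "k \<in> {1..n}" "k \<noteq> n - i" using 2 assms by auto
    then show ?thesis using 2 by (simp add: refl_obj_def)
  next
    case 3
    have "k \<in> {1..n} \<Longrightarrow> n + 1 - k \<noteq> i \<and> n + 1 - k \<noteq> i + 1" using 3 assms by auto
    then show ?thesis using 3 by (simp add: refl_obj_def)
  qed
qed

lemma refl_obj_m: assumes "1 \<le> i" "i < n"
  shows "refl_obj G n \<beta> (n - i) = inv\<^bsub>G\<^esub> (\<beta> (i + 1))" "refl_obj G n \<beta> (n - i + 1) = inv\<^bsub>G\<^esub> (\<beta> i)"
proof -
  have "n + 1 - (n - i) = i + 1" "n - i \<in> {1..n}" "n + 1 - (n - i + 1) = i" "n - i + 1 \<in> {1..n}"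
    using assms by auto
  then show "refl_obj G n \<beta> (n - i) = inv\<^bsub>G\<^esub> (\<beta> (i + 1))" "refl_obj G n \<beta> (n - i + 1) = inv\<^bsub>G\<^esub> (\<beta> i)"
    unfolding refl_obj_def by auto
qed

context group begin

lemma cancel1[simp]: "x \<in> carrier G \<Longrightarrow> y \<in> carrier G \<Longrightarrow> x \<otimes> (inv x \<otimes> y) = y"
  by (simp add: m_assoc[symmetric])

lemma cancel2[simp]: "x \<in> carrier G \<Longrightarrow> y \<in> carrier G \<Longrightarrow> inv x \<otimes> (x \<otimes> y) = y"
  by (simp add: m_assoc[symmetric])

lemma gen_act_key_T: assumes "1 \<le> i" "i < n" "allc G \<beta>"
  shows "gen_act G (n - i, True) (refl_obj G n (gen_act G (i, True) \<beta>)) = refl_obj G n \<beta>"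
proof -
  have c: "\<beta> i \<in> carrier G" "\<beta> (i+1) \<in> carrier G" using assms(3) unfolding allc_def by auto
  note m = refl_obj_m[OF assms(1,2), simplified]
  have "gen_act G (i, True) \<beta> = \<beta>(i := \<beta> i \<otimes> \<beta> (i+1) \<otimes> inv (\<beta> i), i + 1 := \<beta> i)"
    unfolding gen_act_def by simp
  then have e: "refl_obj G n (gen_act G (i, True) \<beta>) = (refl_obj G n \<beta>)(n - i := inv (\<beta> i), n - i + 1 := inv (\<beta> i \<otimes> \<beta> (i+1) \<otimes> inv (\<beta> i)))"
    using refl_obj_upd[OF assms(1,2)] by simp
  show ?thesis unfolding e unfolding gen_act_def
    using c by (simp add: m inv_mult_group m_assoc fun_eq_iff)
qed

lemma gen_act_key_F: assumes "1 \<le> i" "i < n" "allc G \<beta>"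
  shows "gen_act G (n - i, False) (refl_obj G n (gen_act G (i, False) \<beta>)) = refl_obj G n \<beta>"
proof -
  have c: "\<beta> i \<in> carrier G" "\<beta> (i+1) \<in> carrier G" using assms(3) unfolding allc_def by auto
  note m = refl_obj_m[OF assms(1,2), simplified]
  have "gen_act G (i, False) \<beta> = \<beta>(i := \<beta> (i+1), i + 1 := inv (\<beta> (i+1)) \<otimes> \<beta> i \<otimes> \<beta> (i+1))"
    unfolding gen_act_def by simp
  then have e: "refl_obj G n (gen_act G (i, False) \<beta>) = (refl_obj G n \<beta>)(n - i := inv (inv (\<beta> (i+1)) \<otimes> \<beta> i \<otimes> \<beta> (i+1)), n - i + 1 := inv (\<beta> (i+1)))"
    using refl_obj_upd[OF assms(1,2)] by simp
  show ?thesis unfolding e unfolding gen_act_def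
    using c by (simp add: m inv_mult_group m_assoc fun_eq_iff)
qed

lemma gen_act_key: assumes "1 \<le> i" "i < n" "allc G \<beta>"
  shows "gen_act G (n - i, s) (refl_obj G n (gen_act G (i, s) \<beta>)) = refl_obj G n \<beta>"
  using gen_act_key_T[OF assms] gen_act_key_F[OF assms] by (cases s) auto

lemma gen_act_inv: assumes "allc G \<beta>"
  shows "gen_act G (i, True) (gen_act G (i, False) \<beta>) = \<beta>"
proof -
  have c: "\<beta> i \<in> carrier G" "\<beta> (i+1) \<in> carrier G" using assms unfolding allc_def by auto
  show ?thesis unfolding gen_act_def prod.case if_True if_False
    using c by (simp add: m_assoc fun_eq_iff)
qed


lemma rho_eq: assumes "1 \<le> i" "i < n" shows "rho n k = i + 1 \<longleftrightarrow> k = n - i"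
  using assms unfolding rho_def by auto

lemma swp_eq: "swp i x = i \<longleftrightarrow> x = i + 1"
  unfolding swp_def by auto

lemma Phi_gen_pos: assumes "1 \<le> i" "i < n"
  shows "Phi G n (gen_pos_elt G i \<beta>) = ((\<lambda>k. \<one>)(n - i := inv (\<beta> i)), swp (n - i))"
proof -
  have p: "rho n \<circ> swp i \<circ> rho n = swp (n - i)"
    using rho_swp_pt[OF assms] by (simp add: fun_eq_iff)
  have f: "(\<lambda>k. inv (((\<lambda>k. \<one>)(i := \<beta> i)) (swp i (rho n k)))) = (\<lambda>k. \<one>)(n - i := inv (\<beta> i))"
  proof (rule ext)
    fix k
    show "inv (((\<lambda>k. \<one>)(i := \<beta> i)) (swp i (rho n k))) = ((\<lambda>k. \<one>)(n - i := inv (\<beta> i))) k"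
      using rho_eq[OF assms, of k] swp_eq[of i "rho n k"] by auto
  qed
  show ?thesis unfolding gen_pos_elt_swp Phi_def prod.case inv_swp p f ..
qed

lemma gen_elt_key_T: assumes "1 \<le> i" "i < n" "allc G \<beta>"
  shows "gen_elt G (n - i, True) (refl_obj G n (gen_act G (i, True) \<beta>)) = Phi G n (gen_elt G (i, True) \<beta>)"
proof -
  have "refl_obj G n (gen_act G (i, True) \<beta>) (n - i) = inv (\<beta> i)"
    unfolding refl_obj_m[OF assms(1,2)] by (simp add: gen_act_def)
  then show ?thesis unfolding gen_elt_def prod.case if_True Phi_gen_pos[OF assms(1,2)]
    unfolding gen_pos_elt_swp by simp
qed

lemma gen_elt_key: assumes "1 \<le> i" "i < n" "allc G \<beta>"
  shows "gen_elt G (n - i, s) (refl_obj G n (gen_act G (i, s) \<beta>)) = Phi G n (gen_elt G (i, s) \<beta>)"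
proof (cases s)
  case True
  then show ?thesis using gen_elt_key_T[OF assms] by simp
next
  case False
  define \<beta>' where "\<beta>' = gen_act G (i, False) \<beta>"
  have a': "allc G \<beta>'" unfolding \<beta>'_def by (rule allc_gen_act[OF assms(3)])
  have inv': "gen_act G (i, True) \<beta>' = \<beta>" unfolding \<beta>'_def by (rule gen_act_inv[OF assms(3)])
  have "Phi G n (gen_elt G (i, False) \<beta>) = Phi G n (sd_inv G (gen_pos_elt G i \<beta>'))"
    unfolding gen_elt_def \<beta>'_def by simp
  also have "\<dots> = sd_inv G (Phi G n (gen_pos_elt G i \<beta>'))"
    by (rule Phi_sd_inv[OF good_gen_pos[OF a']])
  also have "Phi G n (gen_pos_elt G i \<beta>') = gen_elt G (n - i, True) (refl_obj G n \<beta>)"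
    using gen_elt_key_T[OF assms(1,2) a'] unfolding inv' gen_elt_def by simp
  also have "gen_elt G (n - i, True) (refl_obj G n \<beta>) = gen_pos_elt G (n - i) (gen_act G (n - i, False) (refl_obj G n \<beta>'))"
    using gen_act_key_F[OF assms] unfolding gen_elt_def \<beta>'_def by simp
  finally have "Phi G n (gen_elt G (i, False) \<beta>) = gen_elt G (n - i, False) (refl_obj G n (gen_act G (i, False) \<beta>))"
    unfolding gen_elt_def \<beta>'_def by simp
  then show ?thesis using False by simp
qed


lemma sd_mult_unit_r: "good G x \<Longrightarrow> sd_mult G x ((\<lambda>k. \<one>), id) = x"
proof -
  assume a: "good G x"
  obtain h t where y: "x = (h, t)" by fastforce
  have "\<And>j. h j \<in> carrier G" using a y unfolding good_def by auto
  then show ?thesis unfolding y sd_mult_def prod.case by (simp add: fun_eq_iff)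
qed

lemma allc_refl_obj: "allc G \<gamma> \<Longrightarrow> allc G (refl_obj G n \<gamma>)"
  unfolding allc_def refl_obj_def by auto

lemma braid_act_append: "braid_act G (u @ v) \<gamma> = braid_act G u (braid_act G v \<gamma>)"
  by (induction u) auto

lemma braid_elt_append: "allc G \<gamma> \<Longrightarrow>
  braid_elt G (u @ v) \<gamma> = sd_mult G (braid_elt G u (braid_act G v \<gamma>)) (braid_elt G v \<gamma>)"
proof (induction u)
  case Nil
  then show ?case by (simp add: sd_mult_unit good_braid_elt)
next
  case (Cons x u)
  have a: "allc G (braid_act G v \<gamma>)" "allc G (braid_act G u (braid_act G v \<gamma>))"
    using Cons.prems allc_braid_act by auto
  show ?case using Cons
    by (simp add: braid_act_append sd_mult_assoc good_gen_elt good_braid_elt a)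
qed

lemma Phi_unit: "Phi G n ((\<lambda>k. \<one>), id) = ((\<lambda>k. \<one>), id)"
  unfolding Phi_def by (simp add: fun_eq_iff)

lemma main_lemma: "set w \<subseteq> gens n \<Longrightarrow> allc G \<gamma> \<Longrightarrow>
   braid_act G (refl_word n w) (refl_obj G n (braid_act G w \<gamma>)) = refl_obj G n \<gamma> \<and>
   braid_elt G (refl_word n w) (refl_obj G n (braid_act G w \<gamma>)) = Phi G n (braid_elt G w \<gamma>)"
proof (induction w)
  case Nil
  then show ?case by (simp add: refl_word_def Phi_unit)
next
  case (Cons x w)
  obtain i s where x: "x = (i, s)" by fastforce
  have i: "1 \<le> i" "i < n" using Cons.prems(1) x unfolding gens_def by auto
  define \<beta> where "\<beta> = braid_act G w \<gamma>"
  have ab: "allc G \<beta>" unfolding \<beta>_def using allc_braid_act Cons.prems(2) by auto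
  have IH: "braid_act G (refl_word n w) (refl_obj G n \<beta>) = refl_obj G n \<gamma>"
     "braid_elt G (refl_word n w) (refl_obj G n \<beta>) = Phi G n (braid_elt G w \<gamma>)"
    using Cons unfolding \<beta>_def by auto
  have rw: "refl_word n (x # w) = refl_word n w @ [(n - i, s)]"
    unfolding refl_word_def x by simp
  define \<delta> where "\<delta> = refl_obj G n (gen_act G (i, s) \<beta>)"
  have ad: "allc G \<delta>" unfolding \<delta>_def by (intro allc_refl_obj allc_gen_act ab)
  have k1: "gen_act G (n - i, s) \<delta> = refl_obj G n \<beta>"
    unfolding \<delta>_def by (rule gen_act_key[OF i ab])
  have k2: "gen_elt G (n - i, s) \<delta> = Phi G n (gen_elt G (i, s) \<beta>)"
    unfolding \<delta>_def by (rule gen_elt_key[OF i ab])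
  have bx: "braid_act G (x # w) \<gamma> = gen_act G (i, s) \<beta>" unfolding x \<beta>_def by simp
  have "braid_act G (refl_word n (x # w)) (refl_obj G n (braid_act G (x # w) \<gamma>)) = refl_obj G n \<gamma>"
    unfolding bx rw braid_act_append \<delta>_def[symmetric] using k1 IH(1) by simp
  moreover have "braid_elt G (refl_word n (x # w)) (refl_obj G n (braid_act G (x # w) \<gamma>)) = Phi G n (braid_elt G (x # w) \<gamma>)"
  proof -
    have "braid_elt G (refl_word n (x # w)) (refl_obj G n (braid_act G (x # w) \<gamma>))
       = sd_mult G (braid_elt G (refl_word n w) (braid_act G [(n - i, s)] \<delta>)) (braid_elt G [(n - i, s)] \<delta>)"
      unfolding bx rw \<delta>_def[symmetric] by (rule braid_elt_append[OF ad])
    also have "\<dots> = sd_mult G (Phi G n (braid_elt G w \<gamma>)) (Phi G n (gen_elt G (i, s) \<beta>))"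
      using k1 k2 IH(2) by (simp add: sd_mult_unit_r good_Phi good_gen_elt ab)
    also have "\<dots> = Phi G n (sd_mult G (gen_elt G (i, s) \<beta>) (braid_elt G w \<gamma>))"
      by (rule Phi_anti[symmetric]) (auto intro: good_gen_elt good_braid_elt ab Cons.prems(2))
    also have "\<dots> = Phi G n (braid_elt G (x # w) \<gamma>)" unfolding x \<beta>_def by simp
    finally show ?thesis .
  qed
  ultimately show ?case ..
qed


lemma allc_objs: "\<gamma> \<in> objs G n \<Longrightarrow> allc G \<gamma>"
  unfolding objs_def allc_def
proof (intro allI)
  fix k assume "\<gamma> \<in> {\<gamma>. (\<forall>k\<in>{1..n}. \<gamma> k \<in> carrier G) \<and> (\<forall>k. k \<notin> {1..n} \<longrightarrow> \<gamma> k = \<one>)}"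
  then show "\<gamma> k \<in> carrier G" by (cases "k \<in> {1..n}") auto
qed

lemma refl_refl: "\<gamma> \<in> objs G n \<Longrightarrow> refl_obj G n (refl_obj G n \<gamma>) = \<gamma>"
proof (rule ext)
  fix k assume g: "\<gamma> \<in> objs G n"
  show "refl_obj G n (refl_obj G n \<gamma>) k = \<gamma> k"
  proof (cases "k \<in> {1..n}")
    case True
    then have "n + 1 - k \<in> {1..n}" "n + 1 - (n + 1 - k) = k" by auto
    moreover have "\<gamma> k \<in> carrier G" using g True unfolding objs_def by auto
    ultimately show ?thesis using True unfolding refl_obj_def by simp
  next
    case False
    then show ?thesis using g unfolding refl_obj_def objs_def by auto
  qed
qed

end

lemma refl_word_gens: "set w \<subseteq> gens n \<Longrightarrow> set (refl_word n w) \<subseteq> gens n"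
proof
  fix y assume w: "set w \<subseteq> gens n" and "y \<in> set (refl_word n w)"
  then obtain i s where y: "y = (n - i, s)" and "(i, s) \<in> set w" unfolding refl_word_def by auto
  then have "1 \<le> i" "i \<le> n - 1" using w unfolding gens_def by auto
  then have "1 \<le> n - i" "n - i \<le> n - 1" by linarith+
  then show "y \<in> gens n" unfolding y gens_def by simp
qed

lemma refl_word_refl_word: "set w \<subseteq> gens n \<Longrightarrow> refl_word n (refl_word n w) = w"
proof (induction w)
  case Nil then show ?case by (simp add: refl_word_def)
next
  case (Cons x w)
  obtain i s where x: "x = (i, s)" by fastforce
  have "i \<le> n" using Cons.prems x unfolding gens_def by auto
  then show ?case using Cons x unfolding refl_word_def by simp
qed

context group begin

lemma refl_mor_eq: assumes "f \<in> hom G n \<gamma>1 \<gamma>2" "allc G \<gamma>1"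
  shows "refl_mor G n \<gamma>1 f = Phi G n f"
proof -
  obtain w where w: "set w \<subseteq> gens n" "braid_elt G w \<gamma>1 = f" using assms(1) unfolding hom_def by auto
  define w' where "w' = (SOME w. set w \<subseteq> gens n \<and> braid_elt G w \<gamma>1 = f)"
  have w': "set w' \<subseteq> gens n" "braid_elt G w' \<gamma>1 = f"
    using someI[of "\<lambda>w. set w \<subseteq> gens n \<and> braid_elt G w \<gamma>1 = f", OF conjI[OF w]] unfolding w'_def by auto
  have "refl_mor G n \<gamma>1 f = braid_elt G (refl_word n w') (refl_obj G n (braid_act G w' \<gamma>1))"
    unfolding refl_mor_def w'_def[symmetric] Let_def ..
  also have "\<dots> = Phi G n f" using main_lemma[OF w'(1) assms(2)] w'(2) by simp
  finally show ?thesis .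
qed

lemma Phi_hom: assumes "f \<in> hom G n \<gamma>1 \<gamma>2" "allc G \<gamma>1"
  shows "Phi G n f \<in> hom G n (refl_obj G n \<gamma>2) (refl_obj G n \<gamma>1)"
proof -
  obtain w where w: "set w \<subseteq> gens n" "braid_elt G w \<gamma>1 = f" "braid_act G w \<gamma>1 = \<gamma>2"
    using assms(1) unfolding hom_def by auto
  have m: "braid_act G (refl_word n w) (refl_obj G n \<gamma>2) = refl_obj G n \<gamma>1"
     "braid_elt G (refl_word n w) (refl_obj G n \<gamma>2) = Phi G n f"
    using main_lemma[OF w(1) assms(2)] w(2,3) by auto
  show ?thesis unfolding hom_def mem_Collect_eq
    by (rule exI[of _ "refl_word n w"]) (use m refl_word_gens[OF w(1)] in simp)
qed

lemma Phi_hom2: assumes "h \<in> hom G n (refl_obj G n \<gamma>2) (refl_obj G n \<gamma>1)" "\<gamma>1 \<in> objs G n" "\<gamma>2 \<in> objs G n"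
  shows "Phi G n h \<in> hom G n \<gamma>1 \<gamma>2"
proof -
  have "Phi G n h \<in> hom G n (refl_obj G n (refl_obj G n \<gamma>1)) (refl_obj G n (refl_obj G n \<gamma>2))"
    by (rule Phi_hom[OF assms(1) allc_refl_obj[OF allc_objs[OF assms(3)]]])
  then show ?thesis using refl_refl[OF assms(2)] refl_refl[OF assms(3)] by simp
qed

lemma good_hom: "f \<in> hom G n \<gamma>1 \<gamma>2 \<Longrightarrow> allc G \<gamma>1 \<Longrightarrow> good G f"
  unfolding hom_def using good_braid_elt by auto

end

theorem proposition2p21:
  fixes G (structure) and n :: nat
  assumes "group G" and "finite (carrier G)"
  shows "(\<forall>\<gamma>\<in>objs G n. \<forall>w w'. set w \<subseteq> gens n \<longrightarrow> set w' \<subseteq> gens n \<longrightarrow>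
            braid_elt G w \<gamma> = braid_elt G w' \<gamma> \<longrightarrow>
            braid_elt G (refl_word n w) (refl_obj G n (braid_act G w \<gamma>)) =
            braid_elt G (refl_word n w') (refl_obj G n (braid_act G w' \<gamma>)))
       \<and> (\<forall>\<gamma>1\<in>objs G n. \<forall>\<gamma>2\<in>objs G n.
            bij_betw (refl_mor G n \<gamma>1) (hom G n \<gamma>1 \<gamma>2) (hom G n (refl_obj G n \<gamma>2) (refl_obj G n \<gamma>1)))"
proof (intro conjI ballI allI impI)
  interpret group G by (rule assms(1))
  fix \<gamma> w w'
  assume g: "\<gamma> \<in> objs G n" and w: "set w \<subseteq> gens n" "set w' \<subseteq> gens n"
    and e: "braid_elt G w \<gamma> = braid_elt G w' \<gamma>"
  show "braid_elt G (refl_word n w) (refl_obj G n (braid_act G w \<gamma>)) =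
            braid_elt G (refl_word n w') (refl_obj G n (braid_act G w' \<gamma>))"
    using main_lemma[OF w(1) allc_objs[OF g]] main_lemma[OF w(2) allc_objs[OF g]] e by simp
next
  interpret group G by (rule assms(1))
  fix \<gamma>1 \<gamma>2 assume g1: "\<gamma>1 \<in> objs G n" and g2: "\<gamma>2 \<in> objs G n"
  have a1: "allc G \<gamma>1" using allc_objs[OF g1] .
  have a2: "allc G (refl_obj G n \<gamma>2)" using allc_refl_obj[OF allc_objs[OF g2]] .
  show "bij_betw (refl_mor G n \<gamma>1) (hom G n \<gamma>1 \<gamma>2) (hom G n (refl_obj G n \<gamma>2) (refl_obj G n \<gamma>1))"
  proof (rule bij_betw_byWitness[where f' = "Phi G n"])
    show "\<forall>a\<in>hom G n \<gamma>1 \<gamma>2. Phi G n (refl_mor G n \<gamma>1 a) = a"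
    proof
      fix a assume a: "a \<in> hom G n \<gamma>1 \<gamma>2"
      show "Phi G n (refl_mor G n \<gamma>1 a) = a"
        unfolding refl_mor_eq[OF a a1] by (rule Phi_Phi[OF good_hom[OF a a1]])
    qed
    show "\<forall>a'\<in>hom G n (refl_obj G n \<gamma>2) (refl_obj G n \<gamma>1). refl_mor G n \<gamma>1 (Phi G n a') = a'"
    proof
      fix a assume a: "a \<in> hom G n (refl_obj G n \<gamma>2) (refl_obj G n \<gamma>1)"
      show "refl_mor G n \<gamma>1 (Phi G n a) = a"
        unfolding refl_mor_eq[OF Phi_hom2[OF a g1 g2] a1] by (rule Phi_Phi[OF good_hom[OF a a2]])
    qed
    show "refl_mor G n \<gamma>1 ` hom G n \<gamma>1 \<gamma>2 \<subseteq> hom G n (refl_obj G n \<gamma>2) (refl_obj G n \<gamma>1)"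
    proof
      fix b assume "b \<in> refl_mor G n \<gamma>1 ` hom G n \<gamma>1 \<gamma>2"
      then obtain a where a: "a \<in> hom G n \<gamma>1 \<gamma>2" and b: "b = refl_mor G n \<gamma>1 a" by blast
      show "b \<in> hom G n (refl_obj G n \<gamma>2) (refl_obj G n \<gamma>1)"
        unfolding b refl_mor_eq[OF a a1] by (rule Phi_hom[OF a a1])
    qed
    show "Phi G n ` hom G n (refl_obj G n \<gamma>2) (refl_obj G n \<gamma>1) \<subseteq> hom G n \<gamma>1 \<gamma>2"
      using Phi_hom2[OF _ g1 g2] by blast
  qed
qed

end
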